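(* Let $\mathcal{G}$ be a GBS graph of groups, $w=a_0^{k_0}y_1a_1^{k_1}\cdots y_na_n^{k_n}$ a $\mathcal{G}$-factorization, and $0\le i\le j\le n$. Then $w_{i,j}=a_i^{k_i}y_{i+1}a_{i+1}^{k_{i+1}}\cdots y_ja_j^{k_j}$ represents an element of $\langle a_i\rangle\le F(\mathcal{G})$ if and only if $w_{i,j}=a_i^{k_{i,j}}$ in $F(\mathcal{G})$, where $$k_{i,j}=\sum_{\nu=i}^{j}k_\nu\cdot\prod_{\mu=i+1}^{\nu}\frac{\alpha_\mu}{\beta_\mu}\in\mathbb{Q},\qquad \alpha_\mu=\alpha_{y_\mu},\ \beta_\mu=\beta_{y_\mu}.$$
   Context: $\mathcal{G}$ consists of a finite connected graph $Y$ (vertices $V(Y)$, edges $E(Y)$, maps $\iota,\tau:E(Y)\to V(Y)$, fixed-point-free involution $y\mapsto\bar y$ with $\iota(\bar y)=\tau(y)$) and integers $\alpha_y,\beta_y\in\mathbb{Z}\setminus\{0\}$ with $\alpha_y=\beta_{\bar y}$. $F(\mathcal{G})$ is the group with generators $V(Y)\cup E(Y)$ and relations $\bar yy=1$, $y\,b^{\beta_y}\bar y=a^{\alpha_y}$ for each $y\in E(Y)$ with $a=\iota(y)$, $b=\tau(y)$. A $\mathcal{G}$-factorization is a word $a_0^{k_0}y_1a_1^{k_1}\cdots y_na_n^{k_n}$ with $y_i\in E(Y)$, $a_i\in V(Y)$, $k_i\in\mathbb{Z}$, $\iota(y_i)=a_{i-1}$, $\tau(y_i)=a_i$ and $a_n=a_0$.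 The statement $w_{i,j}=a_i^{k_{i,j}}$ includes that $k_{i,j}$ is an integer. *)

theory Defs
  imports Complex_Main
begin

(* Letters of words in the generators: (generator, inverted?) *)
type_synonym 'g letter = "'g \<times> bool"

definition gpow :: "'g \<Rightarrow> int \<Rightarrow> 'g letter list" where
  "gpow x k = (if 0 \<le> k then replicate (nat k) (x, False) else replicate (nat (- k)) (x, True))"

inductive pres_eq :: "'g letter list set \<Rightarrow> 'g letter list \<Rightarrow> 'g letter list \<Rightarrow> bool"
  for R :: "'g letter list set" where
  pe_refl: "pres_eq R u u"
| pe_sym: "pres_eq R u v \<Longrightarrow> pres_eq R v u"
| pe_trans: "pres_eq R u v \<Longrightarrow> pres_eq R v w \<Longrightarrow> pres_eq R u w"
| pe_ctxt: "pres_eq R u v \<Longrightarrow> pres_eq R (p @ u @ q) (p @ v @ q)"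
| pe_cancel: "pres_eq R [(x, b), (x, \<not> b)] []"
| pe_rel: "r \<in> R \<Longrightarrow> pres_eq R r []"

definition gbs_graph ::
  "'v set \<Rightarrow> 'e set \<Rightarrow> ('e \<Rightarrow> 'v) \<Rightarrow> ('e \<Rightarrow> 'v) \<Rightarrow> ('e \<Rightarrow> 'e)
   \<Rightarrow> ('e \<Rightarrow> int) \<Rightarrow> ('e \<Rightarrow> int) \<Rightarrow> bool" where
  "gbs_graph V E \<iota> \<tau> bar \<alpha> \<beta> \<longleftrightarrow>
     finite V \<and> finite E \<and> V \<noteq> {} \<and>
     (\<forall>y\<in>E. \<iota> y \<in> V \<and> \<tau> y \<in> V \<and> bar y \<in> E \<and> bar y \<noteq> y \<and> bar (bar y) = y
        \<and> \<iota> (bar y) = \<tau> y \<and> \<alpha> y \<noteq> 0 \<and> \<beta> y \<noteq> 0 \<and> \<alpha> y = \<beta> (bar y)) \<and>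
     (\<forall>u\<in>V. \<forall>v\<in>V. (u, v) \<in> {(\<iota> y, \<tau> y) | y. y \<in> E}\<^sup>*)"

definition gbs_rels ::
  "'e set \<Rightarrow> ('e \<Rightarrow> 'v) \<Rightarrow> ('e \<Rightarrow> 'v) \<Rightarrow> ('e \<Rightarrow> 'e)
   \<Rightarrow> ('e \<Rightarrow> int) \<Rightarrow> ('e \<Rightarrow> int) \<Rightarrow> ('v + 'e) letter list set" where
  "gbs_rels E \<iota> \<tau> bar \<alpha> \<beta> =
     {[(Inr (bar y), False), (Inr y, False)] | y. y \<in> E} \<union>
     {[(Inr y, False)] @ gpow (Inl (\<tau> y)) (\<beta> y) @ [(Inr (bar y), False)]
        @ gpow (Inl (\<iota> y)) (- \<alpha> y) | y. y \<in> E}"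

definition gbs_factorization ::
  "'v set \<Rightarrow> 'e set \<Rightarrow> ('e \<Rightarrow> 'v) \<Rightarrow> ('e \<Rightarrow> 'v)
   \<Rightarrow> nat \<Rightarrow> (nat \<Rightarrow> 'v) \<Rightarrow> (nat \<Rightarrow> int) \<Rightarrow> (nat \<Rightarrow> 'e) \<Rightarrow> bool" where
  "gbs_factorization V E \<iota> \<tau> n a k y \<longleftrightarrow>
     (\<forall>i\<le>n. a i \<in> V) \<and>
     (\<forall>i\<in>{1..n}. y i \<in> E \<and> \<iota> (y i) = a (i - 1) \<and> \<tau> (y i) = a i) \<and>
     a n = a 0"

definition subword ::
  "(nat \<Rightarrow> 'v) \<Rightarrow> (nat \<Rightarrow> int) \<Rightarrow> (nat \<Rightarrow> 'e) \<Rightarrow> nat \<Rightarrow> nat \<Rightarrow> ('v + 'e) letter list" where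
  "subword a k y i j = gpow (Inl (a i)) (k i) @
     concat (map (\<lambda>l. (Inr (y l), False) # gpow (Inl (a l)) (k l)) [Suc i..<Suc j])"

definition kij ::
  "('e \<Rightarrow> int) \<Rightarrow> ('e \<Rightarrow> int) \<Rightarrow> (nat \<Rightarrow> int) \<Rightarrow> (nat \<Rightarrow> 'e) \<Rightarrow> nat \<Rightarrow> nat \<Rightarrow> rat" where
  "kij \<alpha> \<beta> k y i j = (\<Sum>\<nu>=i..j. of_int (k \<nu>) *
      (\<Prod>\<mu>=Suc i..\<nu>. of_int (\<alpha> (y \<mu>)) / of_int (\<beta> (y \<mu>))))"

end

theory Submission
  imports Defs
begin

definition lam :: "('e \<Rightarrow> int) \<Rightarrow> ('e \<Rightarrow> int) \<Rightarrow> 'e \<Rightarrow> rat" where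
  "lam \<alpha> \<beta> e = (if \<alpha> e \<noteq> 0 \<and> \<beta> e \<noteq> 0 then of_int (\<alpha> e) / of_int (\<beta> e) else 1)"

lemma lam_nz: "lam \<alpha> \<beta> e \<noteq> 0"
  by (simp add: lam_def)

definition amul :: "rat \<times> rat \<Rightarrow> rat \<times> rat \<Rightarrow> rat \<times> rat" where
  "amul p q = (fst p * fst q, fst p * snd q + snd p)"

definition ainv :: "rat \<times> rat \<Rightarrow> rat \<times> rat" where
  "ainv p = (1 / fst p, - snd p / fst p)"

fun gen :: "('e \<Rightarrow> int) \<Rightarrow> ('e \<Rightarrow> int) \<Rightarrow> ('v + 'e) \<Rightarrow> rat \<times> rat" where
  "gen \<alpha> \<beta> (Inl v) = (1, 1)"
| "gen \<alpha> \<beta> (Inr e) = (lam \<alpha> \<beta> e, 0)"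

lemma gen_nz: "fst (gen \<alpha> \<beta> g) \<noteq> 0"
  by (cases g) (auto simp: lam_nz)

definition lt :: "('e \<Rightarrow> int) \<Rightarrow> ('e \<Rightarrow> int) \<Rightarrow> ('v + 'e) letter \<Rightarrow> rat \<times> rat" where
  "lt \<alpha> \<beta> l = (if snd l then ainv (gen \<alpha> \<beta> (fst l)) else gen \<alpha> \<beta> (fst l))"

fun ev :: "('e \<Rightarrow> int) \<Rightarrow> ('e \<Rightarrow> int) \<Rightarrow> ('v + 'e) letter list \<Rightarrow> rat \<times> rat" where
  "ev \<alpha> \<beta> [] = (1, 0)"
| "ev \<alpha> \<beta> (l # w) = amul (lt \<alpha> \<beta> l) (ev \<alpha> \<beta> w)"

lemma amul_assoc: "amul (amul p q) r = amul p (amul q r)"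
  by (simp add: amul_def algebra_simps)

lemma amul_one: "amul p (1, 0) = p" "amul (1,0) p = p"
  by (auto simp: amul_def)

lemma ev_append: "ev \<alpha> \<beta> (u @ v) = amul (ev \<alpha> \<beta> u) (ev \<alpha> \<beta> v)"
  by (induction u) (auto simp: amul_one amul_assoc)

lemma ev_gpow: "ev \<alpha> \<beta> (gpow (Inl x) m) = (1, of_int m)"
proof -
  have a: "ev \<alpha> \<beta> (replicate n (Inl x, False)) = (1, of_nat n)" for n
    by (induction n) (auto simp: lt_def amul_def)
  have b: "ev \<alpha> \<beta> (replicate n (Inl x, True)) = (1, - of_nat n)" for n
    by (induction n) (auto simp: lt_def amul_def ainv_def)
  show ?thesis using a b by (auto simp: gpow_def)
qed

lemma pres_ev:
  assumes "pres_eq R u v"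
    and R: "\<And>r. r \<in> R \<Longrightarrow> ev \<alpha> \<beta> r = (1, 0)"
  shows "ev \<alpha> \<beta> u = ev \<alpha> \<beta> v"
  using assms(1)
proof (induction rule: pres_eq.induct)
  case (pe_ctxt u v p q)
  then show ?case by (simp add: ev_append)
next
  case (pe_cancel x b)
  have "fst (gen \<alpha> \<beta> x) \<noteq> 0" by (rule gen_nz)
  then show ?case
    by (cases "gen \<alpha> \<beta> x") (auto simp: lt_def amul_def ainv_def field_simps)
next
  case (pe_rel r)
  then show ?case using R by simp
qed auto

theorem lemma3p2:
  fixes V :: "'v set" and E :: "'e set"
    and \<iota> \<tau> :: "'e \<Rightarrow> 'v" and bar :: "'e \<Rightarrow> 'e" and \<alpha> \<beta> :: "'e \<Rightarrow> int"
    and n :: nat and a :: "nat \<Rightarrow> 'v" and k :: "nat \<Rightarrow> int" and y :: "nat \<Rightarrow> 'e"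
    and i j :: nat
  assumes "gbs_graph V E \<iota> \<tau> bar \<alpha> \<beta>"
    and "gbs_factorization V E \<iota> \<tau> n a k y"
    and "i \<le> j" and "j \<le> n"
  shows "(\<exists>m::int. pres_eq (gbs_rels E \<iota> \<tau> bar \<alpha> \<beta>) (subword a k y i j) (gpow (Inl (a i)) m))
     \<longleftrightarrow> (kij \<alpha> \<beta> k y i j \<in> \<int> \<and>
          pres_eq (gbs_rels E \<iota> \<tau> bar \<alpha> \<beta>) (subword a k y i j)
            (gpow (Inl (a i)) \<lfloor>kij \<alpha> \<beta> k y i j\<rfloor>))"
proof -
  let ?R = "gbs_rels E \<iota> \<tau> bar \<alpha> \<beta>"
  have G: "\<forall>y\<in>E. bar y \<in> E \<and> bar (bar y) = y \<and> \<alpha> y \<noteq> 0 \<and> \<beta> y \<noteq> 0 \<and> \<alpha> y = \<beta> (bar y)"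
    using assms(1) unfolding gbs_graph_def by blast
  have lamE: "lam \<alpha> \<beta> e = of_int (\<alpha> e) / of_int (\<beta> e)" if "e \<in> E" for e
    using G that by (simp add: lam_def)
  have R: "ev \<alpha> \<beta> r = (1, 0)" if "r \<in> ?R" for r
  proof -
    from that obtain e where e: "e \<in> E" and
      r: "r = [(Inr (bar e), False), (Inr e, False)] \<or>
          r = [(Inr e, False)] @ gpow (Inl (\<tau> e)) (\<beta> e) @ [(Inr (bar e), False)]
              @ gpow (Inl (\<iota> e)) (- \<alpha> e)"
      unfolding gbs_rels_def by blast
    have be: "bar e \<in> E" "\<alpha> e \<noteq> 0" "\<beta> e \<noteq> 0" "\<alpha> e = \<beta> (bar e)" "\<alpha> (bar e) = \<beta> e"
      using G e by (metis)+
    have l1: "lam \<alpha> \<beta> e = of_int (\<alpha> e) / of_int (\<beta> e)"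
      and l2: "lam \<alpha> \<beta> (bar e) = of_int (\<beta> e) / of_int (\<alpha> e)"
      using lamE[OF e] lamE[OF be(1)] be by auto
    show ?thesis using r
    proof
      assume "r = [(Inr (bar e), False), (Inr e, False)]"
      then show ?thesis using be by (simp add: lt_def amul_def l1 l2)
    next
      assume "r = [(Inr e, False)] @ gpow (Inl (\<tau> e)) (\<beta> e) @ [(Inr (bar e), False)]
              @ gpow (Inl (\<iota> e)) (- \<alpha> e)"
      then show ?thesis using be
        by (simp add: ev_append ev_gpow lt_def amul_def l1 l2)
    qed
  qed
  have F: "\<forall>l\<in>{1..n}. y l \<in> E"
    using assms(2) unfolding gbs_factorization_def by blast
  have EV: "ev \<alpha> \<beta> (subword a k y i j') =
      ((\<Prod>\<mu>=Suc i..j'. of_int (\<alpha> (y \<mu>)) / of_int (\<beta> (y \<mu>))), kij \<alpha> \<beta> k y i j')"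
    if "i \<le> j'" "j' \<le> n" for j'
    using that
  proof (induction j')
    case 0
    then show ?case by (simp add: subword_def kij_def ev_gpow)
  next
    case (Suc j')
    show ?case
    proof (cases "i = Suc j'")
      case True
      then show ?thesis by (simp add: subword_def kij_def ev_gpow)
    next
      case False
      then have ij: "i \<le> j'" "j' \<le> n" using Suc by auto
      have yE: "y (Suc j') \<in> E" using F Suc by auto
      have sw: "subword a k y i (Suc j') = subword a k y i j' @
          [(Inr (y (Suc j')), False)] @ gpow (Inl (a (Suc j'))) (k (Suc j'))"
        using ij by (simp add: subword_def)
      have pr: "(\<Prod>\<mu>=Suc i..Suc j'. of_int (\<alpha> (y \<mu>)) / of_int (\<beta> (y \<mu>)) :: rat) =
          (\<Prod>\<mu>=Suc i..j'. of_int (\<alpha> (y \<mu>)) / of_int (\<beta> (y \<mu>))) *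
           (of_int (\<alpha> (y (Suc j'))) / of_int (\<beta> (y (Suc j'))))"
        using ij by (simp add: prod.nat_ivl_Suc')
      have kk: "kij \<alpha> \<beta> k y i (Suc j') = kij \<alpha> \<beta> k y i j' +
          of_int (k (Suc j')) * (\<Prod>\<mu>=Suc i..Suc j'. of_int (\<alpha> (y \<mu>)) / of_int (\<beta> (y \<mu>)))"
        using ij unfolding kij_def by (simp add: sum.nat_ivl_Suc')
      define P where "P = (\<Prod>\<mu>=Suc i..j'. of_int (\<alpha> (y \<mu>)) / of_int (\<beta> (y \<mu>)) :: rat)"
      define L where "L = (of_int (\<alpha> (y (Suc j'))) / of_int (\<beta> (y (Suc j'))) :: rat)"
      have "ev \<alpha> \<beta> (subword a k y i (Suc j')) =
         amul (P, kij \<alpha> \<beta> k y i j') (amul (L, 0) (1, of_int (k (Suc j'))))"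
        unfolding sw ev_append ev_gpow using Suc.IH[OF ij] yE
        by (simp add: P_def L_def lt_def amul_def lamE)
      also have "\<dots> = (P * L, kij \<alpha> \<beta> k y i j' + of_int (k (Suc j')) * (P * L))"
        by (simp add: amul_def algebra_simps)
      finally show ?thesis unfolding kk pr P_def L_def .
    qed
  qed
  show ?thesis
  proof
    assume "\<exists>m. pres_eq ?R (subword a k y i j) (gpow (Inl (a i)) m)"
    then obtain m where m: "pres_eq ?R (subword a k y i j) (gpow (Inl (a i)) m)" by blast
    have "ev \<alpha> \<beta> (subword a k y i j) = ev \<alpha> \<beta> (gpow (Inl (a i)) m)"
      using pres_ev[OF m R] by blast
    then have "kij \<alpha> \<beta> k y i j = of_int m"
      using EV[OF assms(3,4)] by (simp add: ev_gpow)
    then show "kij \<alpha> \<beta> k y i j \<in> \<int> \<and>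
          pres_eq ?R (subword a k y i j) (gpow (Inl (a i)) \<lfloor>kij \<alpha> \<beta> k y i j\<rfloor>)"
      using m by simp
  next
    assume "kij \<alpha> \<beta> k y i j \<in> \<int> \<and>
          pres_eq ?R (subword a k y i j) (gpow (Inl (a i)) \<lfloor>kij \<alpha> \<beta> k y i j\<rfloor>)"
    then show "\<exists>m. pres_eq ?R (subword a k y i j) (gpow (Inl (a i)) m)" by blast
  qed
qed

end
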